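(* Let $q\ge2$ and let $D$ be a directed graph on $n$ vertices with an induced acyclic subgraph on $I$ vertices. If $D$ is $q$-solvable, then $n \ge I + q\left(1-\frac1q\right)^{I}$.
   Context: A directed graph $D=(V,E)$ has arcs $E \subseteq \{(u,v)\in V^2 : u \neq v\}$ (bidirectional pairs allowed). An induced subgraph is acyclic if it contains no directed cycle. $N^-(v)=\{u:(u,v)\in E\}$. For $q\ge2$ let $[q]=\{0,\dots,q-1\}$. A $D$-function over $[q]$ is a map $f=(f_v)_{v\in V}:[q]^V\to[q]^V$ with each $f_v(x)$ depending only on $(x_u)_{u\in N^-(v)}$. $D$ is $q$-solvable if some $D$-function $f$ over $[q]$ has the property that for every $x\in[q]^V$ there is $v$ with $f_v(x)=x_v$. *)

theory Defs
  imports Main Complex_Main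
begin

text \<open>A digraph on vertex type 'v is an arc set E without loops.
  Configurations over [q] = {0..<q} are maps x :: 'v => nat with x v < q.\<close>

definition configs :: "nat \<Rightarrow> ('v \<Rightarrow> nat) set" where
  "configs q = {x. \<forall>v. x v < q}"

definition in_nbrs :: "('v \<times> 'v) set \<Rightarrow> 'v \<Rightarrow> 'v set" where
  "in_nbrs E v = {u. (u, v) \<in> E}"

definition is_D_function :: "('v \<times> 'v) set \<Rightarrow> nat \<Rightarrow> ('v \<Rightarrow> ('v \<Rightarrow> nat) \<Rightarrow> nat) \<Rightarrow> bool" where
  "is_D_function E q f \<longleftrightarrow>
     (\<forall>x \<in> configs q. \<forall>v. f v x < q) \<and>
     (\<forall>v. \<forall>x \<in> configs q. \<forall>y \<in> configs q.
        (\<forall>u \<in> in_nbrs E v. x u = y u) \<longrightarrow> f v x = f v y)"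

definition q_solvable :: "('v \<times> 'v) set \<Rightarrow> nat \<Rightarrow> bool" where
  "q_solvable E q \<longleftrightarrow>
     (\<exists>f. is_D_function E q f \<and> (\<forall>x \<in> configs q. \<exists>v. f v x = x v))"

definition induced_acyclic :: "('v \<times> 'v) set \<Rightarrow> 'v set \<Rightarrow> bool" where
  "induced_acyclic E S \<longleftrightarrow> acyclic (E \<inter> (S \<times> S))"

end

theory Submission
  imports Defs "HOL-Library.FuncSet"
begin

lemma configs_PiE: "configs q = (PiE (UNIV::'v::finite set) (\<lambda>_. {0..<q}))"
  by (auto simp: configs_def PiE_def Pi_def extensional_def)

lemma finite_configs: "finite (configs q :: ('v::finite \<Rightarrow> nat) set)"
  unfolding configs_PiE by (intro finite_PiE) auto

lemma card_configs: "card (configs q :: ('v::finite \<Rightarrow> nat) set) = q ^ card (UNIV::'v set)"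
  unfolding configs_PiE by (simp add: card_PiE)

lemma fiber:
  fixes P :: "('v::finite \<Rightarrow> nat) set"
  assumes PC: "P \<subseteq> configs q"
    and cl: "\<And>x c. x \<in> P \<Longrightarrow> c < q \<Longrightarrow> x(s:=c) \<in> P"
    and ind: "\<And>x c. x \<in> P \<Longrightarrow> c < q \<Longrightarrow> h (x(s:=c)) = h x"
    and hq: "\<And>x. x \<in> P \<Longrightarrow> h x < q"
    and q0: "q > 0"
  shows "card {x\<in>P. x s = h x} * q = card P"
proof -
  let ?P0 = "{x\<in>P. x s = 0}"
  have finP: "finite P" using PC finite_configs finite_subset by blast
  have "bij_betw (\<lambda>x. x(s:=0)) {x\<in>P. x s = h x} ?P0"
  proof (rule bij_betw_byWitness[where f' = "\<lambda>y. y(s := h y)"])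
    show "\<forall>a\<in>{x \<in> P. x s = h x}. (a(s := 0))(s := h (a(s := 0))) = a"
      using ind q0 by auto
    show "\<forall>a'\<in>?P0. (a'(s := h a'))(s := 0) = a'" by auto
    show "(\<lambda>x. x(s := 0)) ` {x \<in> P. x s = h x} \<subseteq> ?P0" using cl q0 by auto
    show "(\<lambda>y. y(s := h y)) ` ?P0 \<subseteq> {x \<in> P. x s = h x}" using cl hq ind by auto
  qed
  hence 1: "card {x\<in>P. x s = h x} = card ?P0" by (rule bij_betw_same_card)
  have img: "P = (\<lambda>(y,c). y(s:=c)) ` (?P0 \<times> {0..<q})"
  proof
    show "P \<subseteq> (\<lambda>(y,c). y(s:=c)) ` (?P0 \<times> {0..<q})"
    proof
      fix x assume x: "x \<in> P"
      have "x s < q" using x PC by (auto simp: configs_def)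
      moreover have "x(s:=0) \<in> ?P0" using cl[OF x q0] by auto
      moreover have "x = (x(s:=0))(s:= x s)" by simp
      ultimately show "x \<in> (\<lambda>(y,c). y(s:=c)) ` (?P0 \<times> {0..<q})"
        by (intro image_eqI[where x = "(x(s:=0), x s)"]) auto
    qed
    show "(\<lambda>(y,c). y(s:=c)) ` (?P0 \<times> {0..<q}) \<subseteq> P" using cl by auto
  qed
  have inj: "inj_on (\<lambda>(y,c). y(s:=c)) (?P0 \<times> {0..<q})"
  proof (rule inj_onI, clarify)
    fix y c y' c'
    assume a: "y \<in> P" "y s = 0" "y' \<in> P" "y' s = 0" "y(s := c) = y'(s := c')"
    have "c = c'" using fun_cong[OF a(5), of s] by simp
    moreover have "y = y'"
    proof
      fix v show "y v = y' v" using fun_cong[OF a(5), of v] a(2,4) by (cases "v = s") auto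
    qed
    ultimately show "y = y' \<and> c = c'" by simp
  qed
  have "card P = card ?P0 * q"
    by (subst img, subst card_image[OF inj]) (simp add: card_cartesian_product)
  with 1 show ?thesis by simp
qed

lemma sink_exists:
  assumes "finite (T::'v set)" "T \<noteq> {}" "acyclic (E \<inter> (T \<times> T))"
  shows "\<exists>s\<in>T. \<forall>u\<in>T. (s,u) \<notin> E"
proof -
  have fin: "finite (E \<inter> (T \<times> T))" by (rule finite_Int[OF disjI2]) (simp add: assms(1))
  have wfR: "wf ((E \<inter> (T \<times> T))\<inverse>)" by (rule finite_acyclic_wf_converse[OF fin assms(3)])
  obtain x0 where x0: "x0 \<in> T" using assms(2) by blast
  obtain z where z: "z \<in> T" and zm: "\<And>y. (y, z) \<in> (E \<inter> (T \<times> T))\<inverse> \<Longrightarrow> y \<notin> T"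
    using wfR[unfolded wf_eq_minimal, rule_format, OF x0] by blast
  have "\<forall>u\<in>T. (z,u) \<notin> E"
  proof
    fix u assume u: "u \<in> T"
    show "(z,u) \<notin> E"
    proof
      assume "(z,u) \<in> E"
      hence "(u, z) \<in> (E \<inter> (T \<times> T))\<inverse>" using u z by simp
      thus False using zm u by blast
    qed
  qed
  thus ?thesis using z by blast
qed

lemma main_count:
  fixes E :: "('v::finite \<times> 'v) set" and f :: "'v \<Rightarrow> ('v \<Rightarrow> nat) \<Rightarrow> nat"
  assumes q: "q \<ge> 2" and loop: "\<forall>v. (v, v) \<notin> E" and acy: "acyclic (E \<inter> (S \<times> S))"
    and D: "is_D_function E q f"
  shows "\<forall>T. T \<subseteq> S \<longrightarrow> card T = k \<longrightarrow>
    card {x\<in>configs q. \<forall>v\<in>T. f v x \<noteq> x v} * q ^ k = (q-1) ^ k * q ^ card (UNIV::'v set)"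
proof (induction k)
  case 0
  then show ?case by (auto simp: card_configs)
next
  case (Suc k)
  show ?case
  proof (intro allI impI)
    fix T assume TS: "T \<subseteq> S" and cT: "card T = Suc k"
    have finT: "finite T" by simp
    have "acyclic (E \<inter> (T \<times> T))"
      by (rule acyclic_subset[OF acy]) (use TS in auto)
    then obtain s where sT: "s \<in> T" and sink: "\<forall>u\<in>T. (s,u) \<notin> E"
      using sink_exists[OF finT] cT by fastforce
    define T' where "T' = T - {s}"
    have cT': "card T' = k" using cT sT by (simp add: T'_def)
    have T'S: "T' \<subseteq> S" using TS by (auto simp: T'_def)
    define A where "A = {x\<in>configs q. \<forall>v\<in>T'. f v x \<noteq> x v}"
    have IH: "card A * q ^ k = (q-1) ^ k * q ^ card (UNIV::'v set)"
      unfolding A_def by (rule Suc.IH[rule_format, OF T'S cT'])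
    have Dq: "\<And>x v. x \<in> configs q \<Longrightarrow> f v x < q" using D[unfolded is_D_function_def, THEN conjunct1] by blast
    have Dl: "\<And>x y v. x \<in> configs q \<Longrightarrow> y \<in> configs q \<Longrightarrow> (\<forall>u \<in> in_nbrs E v. x u = y u) \<Longrightarrow> f v x = f v y"
      using D[unfolded is_D_function_def, THEN conjunct2] by metis
    have upd: "\<And>x c. x \<in> configs q \<Longrightarrow> c < q \<Longrightarrow> x(s:=c) \<in> configs q"
      by (auto simp: configs_def)
    have indep: "f v (x(s:=c)) = f v x" if "x \<in> configs q" "c < q" "(s,v) \<notin> E" for x c v
      using Dl[of "x(s:=c)" x v] upd[OF that(1,2)] that by (auto simp: in_nbrs_def)
    have fib: "card {x\<in>A. x s = f s x} * q = card A"
    proof (rule fiber)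
      show "A \<subseteq> configs q" by (auto simp: A_def)
      show "\<And>x c. x \<in> A \<Longrightarrow> c < q \<Longrightarrow> x(s:=c) \<in> A"
      proof -
        fix x c assume x: "x \<in> A" and c: "c < q"
        have xc: "x \<in> configs q" using x by (auto simp: A_def)
        have "\<forall>v\<in>T'. f v (x(s:=c)) \<noteq> (x(s:=c)) v"
        proof
          fix v assume v: "v \<in> T'"
          have "(s,v) \<notin> E" using sink v by (auto simp: T'_def)
          hence "f v (x(s:=c)) = f v x" using indep xc c by blast
          thus "f v (x(s:=c)) \<noteq> (x(s:=c)) v" using x v by (auto simp: A_def T'_def)
        qed
        thus "x(s:=c) \<in> A" using upd[OF xc c] by (auto simp: A_def)
      qed
      show "\<And>x c. x \<in> A \<Longrightarrow> c < q \<Longrightarrow> f s (x(s:=c)) = f s x"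
        using indep loop by (auto simp: A_def)
      show "\<And>x. x \<in> A \<Longrightarrow> f s x < q" using Dq by (auto simp: A_def)
      show "q > 0" using q by simp
    qed
    have split: "{x\<in>configs q. \<forall>v\<in>T. f v x \<noteq> x v} = A - {x\<in>A. x s = f s x}"
      using sT by (auto simp: A_def T'_def)
    have finA: "finite A" unfolding A_def by (rule finite_subset[OF _ finite_configs]) auto
    have cardeq: "card {x\<in>configs q. \<forall>v\<in>T. f v x \<noteq> x v} = card A - card {x\<in>A. x s = f s x}"
      unfolding split by (rule card_Diff_subset) (use finA in auto)
    have "card {x\<in>configs q. \<forall>v\<in>T. f v x \<noteq> x v} * q = card A * (q - 1)"
      using cardeq fib by (simp add: diff_mult_distrib right_diff_distrib' mult.commute)
    hence X: "card {x\<in>configs q. \<forall>v\<in>T. f v x \<noteq> x v} * q = card A * (q - 1)" .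
    have "card {x\<in>configs q. \<forall>v\<in>T. f v x \<noteq> x v} * q ^ Suc k = (card {x\<in>configs q. \<forall>v\<in>T. f v x \<noteq> x v} * q) * q ^ k"
      by (simp add: mult.assoc)
    also have "\<dots> = card A * q ^ k * (q - 1)" unfolding X by (simp add: ac_simps)

    also have "\<dots> = (q-1) ^ Suc k * q ^ card (UNIV::'v set)" using IH by (simp add: algebra_simps)
    finally show "card {x\<in>configs q. \<forall>v\<in>T. f v x \<noteq> x v} * q ^ Suc k = (q-1) ^ Suc k * q ^ card (UNIV::'v set)" .
  qed
qed

theorem corollary14:
  fixes E :: "('v::finite \<times> 'v) set" and S :: "'v set" and q :: nat
  assumes "q \<ge> 2"
    and "\<forall>v. (v, v) \<notin> E"
    and "induced_acyclic E S"
    and "q_solvable E q"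
  shows "real (card (UNIV :: 'v set)) \<ge> real (card S) + real q * (1 - 1 / real q) ^ card S"
proof -
  obtain f where D: "is_D_function E q f" and sol: "\<forall>x\<in>configs q. \<exists>v. f v x = x v"
    using assms(4) unfolding q_solvable_def by blast
  define n where "n = card (UNIV :: 'v set)"
  define I where "I = card S"
  define m where "m = card (- S)"
  have q0: "q > 0" using assms(1) by simp
  have acy: "acyclic (E \<inter> (S \<times> S))" using assms(3) unfolding induced_acyclic_def .
  define AS where "AS = {x\<in>configs q. \<forall>v\<in>S. f v x \<noteq> x v}"
  have c1: "card AS * q ^ I = (q-1) ^ I * q ^ n"
    unfolding AS_def I_def n_def
    by (rule main_count[OF assms(1) assms(2) acy D, rule_format, OF subset_refl refl])
  have Dq: "\<And>x v. x \<in> configs q \<Longrightarrow> f v x < q"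
    using D[unfolded is_D_function_def, THEN conjunct1] by blast
  have Dl: "\<And>x y v. x \<in> configs q \<Longrightarrow> y \<in> configs q \<Longrightarrow> (\<forall>u \<in> in_nbrs E v. x u = y u) \<Longrightarrow> f v x = f v y"
    using D[unfolded is_D_function_def, THEN conjunct2] by metis
  define B where "B v = {x\<in>configs q. x v = f v x}" for v
  have cB: "card (B v) * q = q ^ n" for v
  proof -
    have "card {x\<in>configs q. x v = f v x} * q = card (configs q :: ('v \<Rightarrow> nat) set)"
    proof (rule fiber)
      show "configs q \<subseteq> configs q" by simp
      show "\<And>x c. x \<in> configs q \<Longrightarrow> c < q \<Longrightarrow> x(v:=c) \<in> configs q"
        by (auto simp: configs_def)
      show "\<And>x c. x \<in> configs q \<Longrightarrow> c < q \<Longrightarrow> f v (x(v:=c)) = f v x"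
      proof -
        fix x :: "'v \<Rightarrow> nat" and c assume x: "x \<in> configs q" and c: "c < q"
        have xc: "x(v:=c) \<in> configs q" using x c by (auto simp: configs_def)
        have "\<forall>u \<in> in_nbrs E v. (x(v:=c)) u = x u" using assms(2) by (auto simp: in_nbrs_def)
        thus "f v (x(v:=c)) = f v x" using Dl[OF xc x] by blast
      qed
      show "\<And>x. x \<in> configs q \<Longrightarrow> f v x < q" using Dq by blast
      show "q > 0" by (rule q0)
    qed
    thus ?thesis by (simp add: B_def card_configs n_def)
  qed
  have sub: "AS \<subseteq> (\<Union>v\<in>-S. B v)"
  proof
    fix x assume x: "x \<in> AS"
    then obtain v where v: "f v x = x v" using sol by (auto simp: AS_def)
    have "v \<notin> S" using x v by (auto simp: AS_def)
    moreover have "x \<in> B v" using x v by (auto simp: AS_def B_def)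
    ultimately show "x \<in> (\<Union>v\<in>-S. B v)" by blast
  qed
  have finU: "finite (\<Union>v\<in>-S. B v)" by (rule finite_subset[OF _ finite_configs]) (auto simp: B_def)
  have "card AS \<le> card (\<Union>v\<in>-S. B v)" by (rule card_mono[OF finU sub])
  also have "\<dots> \<le> (\<Sum>v\<in>-S. card (B v))" by (rule card_UN_le) simp
  finally have "card AS * q \<le> (\<Sum>v\<in>-S. card (B v)) * q" by simp
  also have "\<dots> = (\<Sum>v\<in>-S. card (B v) * q)" by (simp add: sum_distrib_right)
  also have "\<dots> = m * q ^ n" using cB by (simp add: m_def)
  finally have c2: "card AS * q \<le> m * q ^ n" .
  have "(q-1) ^ I * q * q ^ n = card AS * q * q ^ I" using c1 by (simp add: ac_simps)
  also have "\<dots> \<le> m * q ^ n * q ^ I" using c2 by simp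
  finally have "(q-1) ^ I * q * q ^ n \<le> (m * q ^ I) * q ^ n" by (simp add: ac_simps)
  hence ineq: "(q-1) ^ I * q \<le> m * q ^ I" using q0 by simp
  have rineq: "real (q-1) ^ I * real q \<le> real m * real q ^ I"
    using ineq by (metis of_nat_le_iff of_nat_mult of_nat_power)
  have rq1: "real (q - 1) = real q - 1" using assms(1) by simp
  have "1 - 1 / real q = (real q - 1) / real q" using q0 by (simp add: field_simps)
  hence "real q * (1 - 1 / real q) ^ I = real q * (real q - 1) ^ I / real q ^ I"
    by (simp add: power_divide)
  also have "\<dots> \<le> real m" using rineq rq1 q0 by (simp add: divide_le_eq mult.commute)
  finally have key: "real q * (1 - 1 / real q) ^ I \<le> real m" .
  have "n = I + m" unfolding n_def I_def m_def
    using card_Un_disjoint[of S "-S"] by simp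
  thus ?thesis using key by (simp add: n_def I_def)
qed

end
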